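(* Let $r\geq1$, let $\mathbf a=(a_1,\ldots,a_r)$ be positive integers, let $D$ be a positive common multiple of $a_1,\ldots,a_r$, and let $j\geq 1$ be an integer dividing $a_i$ for some $1\leq i\leq r$. Put $\rho_j=e^{2\pi i/j}$ and $m(j)=\#\{i:\ j\mid a_i\}$. Then for all $n\geq 0$, $$ W_{j}(n,\mathbf a) =\rho_j^{-n}\left(R_{j,m(j)}\, n^{m(j)-1} + \cdots + R_{j,2}\, n + R_{j,1}\right), \qquad R_{j,m}=\frac{1}{D}\sum_{v=0}^{D-1}\rho_j^v\, d_{\mathbf a,m-1}(v)\ (1\leq m\leq m(j)).$$
   Context: $p_{\mathbf a}(n)$ is the number of integer solutions $(x_1,\ldots,x_r)$ of $a_1x_1+\cdots+a_rx_r=n$ with all $x_i\geq 0$. It is a quasi-polynomial: there are unique functions $d_{\mathbf a,m}:\mathbb N\to\mathbb Q$ ($0\leq m\leq r-1$) with $d_{\mathbf a,m}(n+D)=d_{\mathbf a,m}(n)$ and $p_{\mathbf a}(n)=\sum_{m=0}^{r-1}d_{\mathbf a,m}(n)n^m$ for all $n\geq0$. There are also unique polynomials $P_\lambda$, indexed by the $D$-th roots of unity $\lambda$, with $p_{\mathbf a}(n)=\sum_{\lambda^D=1}P_\lambda(n)\lambda^{-n}$ for all $n\geq 0$. The Sylvester wave is defined by $W_j(n,\mathbf a)=P_{\rho_j}(n)\rho_j^{-n}$ (i.e. $P_{\rho_j}$ is the polynomial part of the quasi-polynomial $\rho_j^n p_{\mathbf a}(n)$). *)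

theory Defs
  imports Complex_Main "HOL-Computational_Algebra.Polynomial"
begin

definition pfun :: "nat \<Rightarrow> (nat \<Rightarrow> nat) \<Rightarrow> nat \<Rightarrow> nat" where
  "pfun r a n = card {x :: nat \<Rightarrow> nat. (\<forall>i\<ge>r. x i = 0) \<and> (\<Sum>i<r. a i * x i) = n}"

text \<open>Quasi-polynomial coefficients d_{a,m} (m < r), D-periodic, with
  p(n) = sum_{m<r} d_m(n) n^m; set to 0 for m >= r to make them unique.\<close>
definition dcoef :: "nat \<Rightarrow> (nat \<Rightarrow> nat) \<Rightarrow> nat \<Rightarrow> nat \<Rightarrow> nat \<Rightarrow> rat" where
  "dcoef r a D = (THE d. (\<forall>m\<ge>r. d m = (\<lambda>_. 0)) \<and>
       (\<forall>m n. d m (n + D) = d m n) \<and>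
       (\<forall>n. of_nat (pfun r a n) = (\<Sum>m<r. d m n * of_nat n ^ m)))"

definition Ppoly :: "nat \<Rightarrow> (nat \<Rightarrow> nat) \<Rightarrow> nat \<Rightarrow> complex \<Rightarrow> complex poly" where
  "Ppoly r a D = (THE P. (\<forall>z. z ^ D \<noteq> 1 \<longrightarrow> P z = 0) \<and>
       (\<forall>n. of_nat (pfun r a n) =
              (\<Sum>z\<in>{z::complex. z ^ D = 1}. poly (P z) (of_nat n) * inverse z ^ n)))"

definition rho :: "nat \<Rightarrow> complex" where
  "rho j = exp (2 * of_real pi * \<i> / of_nat j)"

definition wave :: "nat \<Rightarrow> (nat \<Rightarrow> nat) \<Rightarrow> nat \<Rightarrow> nat \<Rightarrow> nat \<Rightarrow> complex" where
  "wave r a D j n = poly (Ppoly r a D (rho j)) (of_nat n) * inverse (rho j) ^ n"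

definition mult_j :: "nat \<Rightarrow> (nat \<Rightarrow> nat) \<Rightarrow> nat \<Rightarrow> nat" where
  "mult_j r a j = card {i. i < r \<and> j dvd a i}"

definition Rcoef :: "nat \<Rightarrow> (nat \<Rightarrow> nat) \<Rightarrow> nat \<Rightarrow> nat \<Rightarrow> nat \<Rightarrow> complex" where
  "Rcoef r a D j m = (1 / of_nat D) *
     (\<Sum>v<D. rho j ^ v * of_rat (dcoef r a D (m - 1) v))"

end

theory Submission
  imports Defs
begin


definition pset :: "nat \<Rightarrow> (nat \<Rightarrow> nat) \<Rightarrow> nat \<Rightarrow> (nat \<Rightarrow> nat) set" where
  "pset r a n = {x :: nat \<Rightarrow> nat. (\<forall>i\<ge>r. x i = 0) \<and> (\<Sum>i<r. a i * x i) = n}"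

lemma pfun_pset: "pfun r a n = card (pset r a n)"
  by (simp add: pfun_def pset_def)

lemma pset_finite:
  assumes "\<forall>i<r. a i > 0"
  shows "finite (pset r a n)"
proof -
  let ?S = "{x::nat\<Rightarrow>nat. (\<forall>i\<ge>r. x i = 0) \<and> (\<forall>i<r. x i \<le> n)}"
  have sub: "pset r a n \<subseteq> ?S"
  proof
    fix x assume x: "x \<in> pset r a n"
    have "\<forall>i<r. x i \<le> n"
    proof (intro allI impI)
      fix i assume i: "i < r"
      have "a i \<ge> 1" using assms i by (simp add: Suc_le_eq)
      hence "x i \<le> a i * x i" by simp
      also have "\<dots> \<le> (\<Sum>i<r. a i * x i)" using i by (intro member_le_sum) auto
      finally show "x i \<le> n" using x by (simp add: pset_def)
    qed
    thus "x \<in> ?S" using x by (simp add: pset_def)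
  qed
  have inj: "inj_on (\<lambda>x. map x [0..<r]) ?S"
  proof (rule inj_onI)
    fix x y assume "x \<in> ?S" "y \<in> ?S" "map x [0..<r] = map y [0..<r]"
    hence xy: "\<And>i. i < r \<Longrightarrow> x i = y i" "\<forall>i\<ge>r. x i = 0" "\<forall>i\<ge>r. y i = 0"
      by (auto simp: map_eq_conv)
    show "x = y"
    proof
      fix i show "x i = y i" using xy by (cases "i < r") auto
    qed
  qed
  have "(\<lambda>x. map x [0..<r]) ` ?S \<subseteq> {xs. set xs \<subseteq> {..n} \<and> length xs = r}" by auto
  hence "finite ((\<lambda>x. map x [0..<r]) ` ?S)"
    by (rule finite_subset) (rule finite_lists_length_eq, simp)
  hence "finite ?S" using inj finite_imageD by blast
  thus ?thesis using sub finite_subset by blast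
qed

lemma pfun_rec:
  assumes "\<forall>i<Suc r. a i > 0"
  shows "pfun (Suc r) a (n + a r) = pfun (Suc r) a n + pfun r a (n + a r)"
proof -
  let ?A = "pset (Suc r) a (n + a r)"
  have sumeq: "\<And>x v. (\<Sum>i<r. a i * (x(r := v)) i) = (\<Sum>i<r. a i * x i)"
    by (intro sum.cong) auto
  have A0: "{x \<in> ?A. x r = 0} = pset r a (n + a r)"
  proof safe
    fix x assume "x \<in> ?A" "x r = 0"
    hence h: "\<forall>i\<ge>Suc r. x i = 0" "(\<Sum>i<Suc r. a i * x i) = n + a r" "x r = 0"
      by (auto simp: pset_def)
    have "\<forall>i\<ge>r. x i = 0"
    proof (intro allI impI)
      fix i assume "r \<le> i" thus "x i = 0" using h by (cases "i = r") auto
    qed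
    moreover have "(\<Sum>i<r. a i * x i) = n + a r" using h by simp
    ultimately show "x \<in> pset r a (n + a r)" by (simp add: pset_def)
  next
    fix x assume "x \<in> pset r a (n + a r)"
    thus "x \<in> ?A" by (auto simp: pset_def)
  next
    fix x assume "x \<in> pset r a (n + a r)"
    thus "x r = 0" by (auto simp: pset_def)
  qed
  have A1: "bij_betw (\<lambda>x. x(r := x r - 1)) {x \<in> ?A. x r \<noteq> 0} (pset (Suc r) a n)"
  proof (rule bij_betw_byWitness[where f' = "\<lambda>y. y(r := Suc (y r))"])
    show "\<forall>x\<in>{x \<in> ?A. x r \<noteq> 0}. (\<lambda>y. y(r := Suc (y r))) (x(r := x r - 1)) = x"
      by (auto simp: fun_eq_iff)
    show "\<forall>y\<in>pset (Suc r) a n. (\<lambda>x. x(r := x r - 1)) (y(r := Suc (y r))) = y"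
      by (auto simp: fun_eq_iff)
    show "(\<lambda>x. x(r := x r - 1)) ` {x \<in> ?A. x r \<noteq> 0} \<subseteq> pset (Suc r) a n"
    proof (rule image_subsetI)
      fix x assume "x \<in> {x \<in> ?A. x r \<noteq> 0}"
      hence x: "x \<in> ?A" "x r \<noteq> 0" by auto
      then obtain k where k: "x r = Suc k" by (cases "x r") auto
      have h: "\<forall>i\<ge>Suc r. x i = 0" "(\<Sum>i<r. a i * x i) + a r * Suc k = n + a r"
        using x k by (auto simp: pset_def)
      have "(\<Sum>i<Suc r. a i * (x(r := x r - 1)) i) = (\<Sum>i<r. a i * x i) + a r * k"
        using k by (simp add: sumeq)
      also have "\<dots> = n" using h(2) by simp
      finally show "x(r := x r - 1) \<in> pset (Suc r) a n"
        using h(1) by (simp add: pset_def)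
    qed
    show "(\<lambda>y. y(r := Suc (y r))) ` pset (Suc r) a n \<subseteq> {x \<in> ?A. x r \<noteq> 0}"
    proof (rule image_subsetI)
      fix y assume y: "y \<in> pset (Suc r) a n"
      hence h: "\<forall>i\<ge>Suc r. y i = 0" "(\<Sum>i<r. a i * y i) + a r * y r = n"
        by (auto simp: pset_def)
      have "(\<Sum>i<Suc r. a i * (y(r := Suc (y r))) i) = (\<Sum>i<r. a i * y i) + a r * Suc (y r)"
        by (simp add: sumeq)
      also have "\<dots> = n + a r" using h(2) by simp
      finally show "y(r := Suc (y r)) \<in> {x \<in> ?A. x r \<noteq> 0}" using h(1) by (simp add: pset_def)
    qed
  qed
  have fin: "finite ?A" using pset_finite[OF assms] .
  have "?A = {x \<in> ?A. x r = 0} \<union> {x \<in> ?A. x r \<noteq> 0}" by auto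
  hence "card ?A = card {x \<in> ?A. x r = 0} + card {x \<in> ?A. x r \<noteq> 0}"
    using fin by (metis (no_types, lifting) card_Un_disjoint disjoint_iff finite_Un mem_Collect_eq)
  also have "card {x \<in> ?A. x r \<noteq> 0} = card (pset (Suc r) a n)" using bij_betw_same_card[OF A1] .
  finally show ?thesis by (simp add: pfun_pset A0)
qed

lemma pfun_0: "pfun 0 a n = (if n = 0 then 1 else 0)"
proof -
  have "pset 0 a n = (if n = 0 then {\<lambda>_. 0} else {})" by (auto simp: pset_def)
  thus ?thesis by (simp add: pfun_pset)
qed



definition dif :: "(nat \<Rightarrow> 'a::ab_group_add) \<Rightarrow> nat \<Rightarrow> 'a" where
  "dif f n = f (Suc n) - f n"

lemma dif_pow_Suc: "(dif ^^ Suc t) f n = (dif ^^ t) f (Suc n) - (dif ^^ t) f n"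
  by (simp add: dif_def)

lemma dif_pow_shift: "(dif ^^ t) (\<lambda>n. f (n + s)) = (\<lambda>n. (dif ^^ t) f (n + s))"
  by (induction t) (simp_all add: dif_def fun_eq_iff)

lemma dif_pow_sum: "(dif ^^ t) (\<lambda>n. \<Sum>s\<in>S. h s n) = (\<lambda>n. \<Sum>s\<in>S. (dif ^^ t) (h s) n)"
  by (induction t) (simp_all add: dif_def fun_eq_iff sum_subtractf)

lemma dif_pow_zero: "(dif ^^ t) (\<lambda>n. 0) = (\<lambda>n. 0::'a::ab_group_add)"
  by (induction t) (simp_all add: dif_def fun_eq_iff)

lemma newton:
  fixes f :: "nat \<Rightarrow> 'a::comm_ring_1"
  shows "f k = (\<Sum>t\<le>k. of_nat (k choose t) * (dif ^^ t) f 0)"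
proof (induction k arbitrary: f)
  case 0 thus ?case by simp
next
  case (Suc k)
  define A where "A t = (dif ^^ t) f 0" for t
  have sh: "(dif ^^ t) (\<lambda>n. f (Suc n)) 0 = A t + A (Suc t)" for t
    using dif_pow_shift[of t f 1] by (simp add: A_def dif_def fun_eq_iff)
  have "f (Suc k) = (\<Sum>t\<le>k. of_nat (k choose t) * (A t + A (Suc t)))"
    using Suc[of "\<lambda>n. f (Suc n)"] by (simp add: sh)
  also have "\<dots> = (\<Sum>t\<le>k. of_nat (k choose t) * A t) + (\<Sum>t\<le>k. of_nat (k choose t) * A (Suc t))"
    by (simp add: distrib_left sum.distrib)
  also have "(\<Sum>t\<le>k. of_nat (k choose t) * A t) = (\<Sum>t\<le>Suc k. of_nat (k choose t) * A t)"
    by (simp add: binomial_eq_0)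
  also have "\<dots> = A 0 + (\<Sum>t\<le>k. of_nat (k choose Suc t) * A (Suc t))"
    by (subst sum.atMost_Suc_shift) (simp add: binomial_eq_0)
  also have "A 0 + (\<Sum>t\<le>k. of_nat (k choose Suc t) * A (Suc t)) + (\<Sum>t\<le>k. of_nat (k choose t) * A (Suc t))
      = A 0 + (\<Sum>t\<le>k. of_nat (Suc k choose Suc t) * A (Suc t))"
    by (simp add: sum.distrib[symmetric] algebra_simps)
  also have "\<dots> = (\<Sum>t\<le>Suc k. of_nat (Suc k choose t) * A t)"
    by (simp only: sum.atMost_Suc_shift[where n=k]) simp
  finally show ?case by (simp add: A_def)
qed

definition Bpoly :: "nat \<Rightarrow> 'a::field_char_0 poly" where
  "Bpoly t = smult (1 / fact t) (\<Prod>i\<in>{0..<t}. [:- of_nat i, 1:])"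

lemma poly_Bpoly: "poly (Bpoly t) (of_nat k) = (of_nat (k choose t) :: 'a::field_char_0)"
proof -
  have "poly (Bpoly t) (of_nat k) = (\<Prod>i = 0..<t. (of_nat k::'a) - of_nat i) / fact t"
    by (simp add: Bpoly_def poly_prod)
  also have "\<dots> = (of_nat k gchoose t)"
    by (simp add: gbinomial_mult_fact'[symmetric])
  finally show ?thesis by (simp add: binomial_gbinomial)
qed

lemma degree_Bpoly: "degree (Bpoly t :: 'a::field_char_0 poly) \<le> t"
proof -
  have "degree (\<Prod>i\<in>{0..<t}. [:- of_nat i, 1::'a:]) \<le> sum (degree \<circ> (\<lambda>i. [:- of_nat i, 1::'a:])) {0..<t}"
    by (rule degree_prod_sum_le) simp
  also have "\<dots> = t" by simp
  finally show ?thesis unfolding Bpoly_def using degree_smult_le order_trans by blast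
qed

lemma dif_zero_poly:
  fixes f :: "nat \<Rightarrow> rat"
  assumes "\<forall>n. (dif ^^ r) f n = 0"
  shows "\<exists>Q. (\<forall>m\<ge>r. coeff Q m = 0) \<and> (\<forall>k. f k = poly Q (of_nat k))"
proof -
  define c where "c t = (dif ^^ t) f 0" for t
  have cz: "c t = 0" if "t \<ge> r" for t
  proof -
    have "(dif ^^ t) f = (dif ^^ (t - r) \<circ> dif ^^ r) f"
      using that by (metis funpow_add le_add_diff_inverse2)
    hence "(dif ^^ t) f = (dif ^^ (t - r)) ((dif ^^ r) f)" by simp
    also have "(dif ^^ r) f = (\<lambda>n. 0)" using assms by auto
    finally show ?thesis by (simp add: c_def dif_pow_zero)
  qed
  define Q where "Q = (\<Sum>t<r. smult (c t) (Bpoly t))"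
  have "f k = poly Q (of_nat k)" for k
  proof -
    have "f k = (\<Sum>t\<le>k. of_nat (k choose t) * c t)" using newton[of f k] by (simp add: c_def)
    also have "\<dots> = (\<Sum>t\<in>{..k} \<inter> {..<r}. of_nat (k choose t) * c t)"
      apply (rule sum.mono_neutral_right) apply auto by (meson cz not_less)
    also have "\<dots> = (\<Sum>t<r. of_nat (k choose t) * c t)"
      by (rule sum.mono_neutral_left) auto
    also have "\<dots> = poly Q (of_nat k)"
      by (simp add: Q_def poly_sum poly_Bpoly mult.commute)
    finally show ?thesis .
  qed
  moreover have "coeff Q m = 0" if "m \<ge> r" for m
  proof -
    have "coeff (Bpoly t :: rat poly) m = 0" if "t < r" for t
      using degree_Bpoly[of t, where 'a=rat] \<open>m \<ge> r\<close> that by (intro coeff_eq_0) linarith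
    thus ?thesis by (simp add: Q_def coeff_sum)
  qed
  ultimately show ?thesis by blast
qed



lemma tele:
  assumes "\<forall>i<Suc r. a i > 0"
  shows "(of_nat (pfun (Suc r) a (n + q * a r)) :: rat) - of_nat (pfun (Suc r) a n)
          = (\<Sum>t<q. of_nat (pfun r a (n + t * a r + a r)))"
proof -
  let ?F = "\<lambda>t. (of_nat (pfun (Suc r) a (n + t * a r)) :: rat)"
  have "?F (Suc t) - ?F t = of_nat (pfun r a (n + t * a r + a r))" for t
    using pfun_rec[OF assms, of "n + t * a r"] by (simp add: algebra_simps)
  hence "(\<Sum>t<q. of_nat (pfun r a (n + t * a r + a r))) = (\<Sum>t<q. ?F (Suc t) - ?F t)" by simp
  also have "\<dots> = ?F q - ?F 0" by (rule sum_lessThan_telescope)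
  finally show ?thesis by simp
qed

lemma difzero:
  "(\<forall>i<r. a i > 0) \<Longrightarrow> (\<forall>i<r. a i dvd D) \<Longrightarrow> 1 \<le> r \<Longrightarrow>
    \<forall>v n. (dif ^^ r) (\<lambda>k. (of_nat (pfun r a (v + k * D)) :: rat)) n = 0"
proof (induction r)
  case 0 thus ?case by simp
next
  case (Suc r)
  obtain q where q: "D = a r * q" using Suc.prems(2) by auto
  have pos: "\<forall>i<Suc r. a i > 0" using Suc.prems(1) .
  have dg: "dif (\<lambda>k. (of_nat (pfun (Suc r) a (v + k * D)) :: rat))
        = (\<lambda>k. \<Sum>t<q. of_nat (pfun r a ((v + t * a r + a r) + k * D)))" for v
  proof
    fix k
    have "dif (\<lambda>k. (of_nat (pfun (Suc r) a (v + k * D)) :: rat)) k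
        = of_nat (pfun (Suc r) a ((v + k * D) + q * a r)) - of_nat (pfun (Suc r) a (v + k * D))"
      by (simp add: dif_def q algebra_simps)
    also have "\<dots> = (\<Sum>t<q. of_nat (pfun r a ((v + k * D) + t * a r + a r)))"
      by (rule tele[OF pos])
    also have "\<dots> = (\<Sum>t<q. of_nat (pfun r a ((v + t * a r + a r) + k * D)))"
      by (simp add: algebra_simps)
    finally show "dif (\<lambda>k. (of_nat (pfun (Suc r) a (v + k * D)) :: rat)) k =
       (\<Sum>t<q. of_nat (pfun r a ((v + t * a r + a r) + k * D)))" .
  qed
  show ?case
  proof (intro allI)
    fix v n
    have "(dif ^^ Suc r) (\<lambda>k. (of_nat (pfun (Suc r) a (v + k * D)) :: rat)) n
        = (dif ^^ r) (dif (\<lambda>k. of_nat (pfun (Suc r) a (v + k * D)))) n"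
      by (simp add: funpow_Suc_right del: funpow.simps)
    also have "\<dots> = (dif ^^ r) (\<lambda>k. \<Sum>t<q. of_nat (pfun r a ((v + t * a r + a r) + k * D))) n"
      by (simp only: dg)
    also have "\<dots> = 0"
    proof (cases "r = 0")
      case True
      have "pfun 0 a ((v + t * a 0 + a 0) + k * D) = 0" for t k
        using pos by (simp add: pfun_0)
      thus ?thesis using True by simp
    next
      case False
      have IH: "\<forall>v n. (dif ^^ r) (\<lambda>k. (of_nat (pfun r a (v + k * D)) :: rat)) n = 0"
        using Suc.IH Suc.prems False by auto
      show ?thesis by (simp add: dif_pow_sum IH)
    qed
    finally show "(dif ^^ Suc r) (\<lambda>k. (of_nat (pfun (Suc r) a (v + k * D)) :: rat)) n = 0" .
  qed
qed

lemma poly_sum_lt: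
  fixes Q :: "'a::comm_semiring_1 poly"
  assumes "\<forall>m\<ge>r. coeff Q m = 0"
  shows "poly Q x = (\<Sum>m<r. coeff Q m * x ^ m)"
proof -
  have "poly Q x = (\<Sum>i\<le>degree Q. coeff Q i * x ^ i)" by (rule poly_altdef)
  also have "\<dots> = (\<Sum>i<max r (Suc (degree Q)). coeff Q i * x ^ i)"
    by (rule sum.mono_neutral_left) (auto simp: coeff_eq_0)
  also have "\<dots> = (\<Sum>m<r. coeff Q m * x ^ m)"
    by (rule sum.mono_neutral_right) (auto simp: assms)
  finally show ?thesis .
qed

lemma quasi_exists:
  assumes "r \<ge> 1" "\<forall>i<r. a i > 0" "D > 0" "\<forall>i<r. a i dvd D"
  shows "\<exists>d::nat\<Rightarrow>nat\<Rightarrow>rat. (\<forall>m\<ge>r. d m = (\<lambda>_. 0)) \<and> (\<forall>m n. d m (n + D) = d m n) \<and>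
           (\<forall>n. of_nat (pfun r a n) = (\<Sum>m<r. d m n * of_nat n ^ m))"
proof -
  have "\<forall>v. \<exists>Q::rat poly. (\<forall>m\<ge>r. coeff Q m = 0) \<and> (\<forall>k. of_nat (pfun r a (v + k * D)) = poly Q (of_nat k))"
    using difzero[OF assms(2,4,1)] by (auto intro!: dif_zero_poly)
  then obtain QQ :: "nat \<Rightarrow> rat poly" where QQ: "\<And>v. \<forall>m\<ge>r. coeff (QQ v) m = 0"
     "\<And>v k. of_nat (pfun r a (v + k * D)) = poly (QQ v) (of_nat k)" by metis
  define Q' where "Q' v = QQ v \<circ>\<^sub>p [:- of_nat v / of_nat D, 1 / of_nat D:]" for v
  have Q'c: "coeff (Q' v) m = 0" if "m \<ge> r" for v m
  proof -
    have "degree (QQ v) \<le> r - 1" using QQ(1)[of v] by (intro degree_le) auto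
    moreover have "degree (Q' v) = degree (QQ v)"
      using assms(3) by (simp add: Q'_def degree_pcompose)
    ultimately show ?thesis using that assms(1) by (intro coeff_eq_0) linarith
  qed
  have Q'p: "of_nat (pfun r a (v + k * D)) = poly (Q' v) (of_nat (v + k * D))" for v k
  proof -
    have e: "poly [:- of_nat v / of_nat D, 1 / of_nat D:] (of_nat (v + k * D)) = (of_nat k :: rat)"
      using assms(3) by (simp add: field_simps)
    show ?thesis unfolding Q'_def poly_pcompose e QQ(2) ..
  qed
  define d where "d m n = coeff (Q' (n mod D)) m" for m n
  have "\<forall>m\<ge>r. d m = (\<lambda>_. 0)" by (auto simp: d_def Q'c)
  moreover have "\<forall>m n. d m (n + D) = d m n" by (simp add: d_def)
  moreover have "of_nat (pfun r a n) = (\<Sum>m<r. d m n * of_nat n ^ m)" for n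
  proof -
    have "of_nat (pfun r a n) = poly (Q' (n mod D)) (of_nat n)"
      using Q'p[of "n mod D" "n div D"] by (simp add: mod_div_mult_eq)
    also have "\<dots> = (\<Sum>m<r. d m n * of_nat n ^ m)"
      unfolding d_def by (rule poly_sum_lt) (simp add: Q'c)
    finally show ?thesis .
  qed
  ultimately show ?thesis by blast
qed

lemma periodic_iter:
  fixes f :: "nat \<Rightarrow> 'b" and D n k :: nat
  assumes "\<forall>n. f (n + D) = f n"
  shows "f (n + k * D) = f n"
  by (induction k) (simp_all add: assms add.assoc[symmetric] add.commute[of D])

lemma quasi_unique:
  fixes d d' :: "nat \<Rightarrow> nat \<Rightarrow> rat"
  assumes "D > 0"
    and "\<forall>m\<ge>r. d m = (\<lambda>_. 0)" "\<forall>m n. d m (n + D) = d m n"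
        "\<forall>n. of_nat (pfun r a n) = (\<Sum>m<r. d m n * of_nat n ^ m)"
    and "\<forall>m\<ge>r. d' m = (\<lambda>_. 0)" "\<forall>m n. d' m (n + D) = d' m n"
        "\<forall>n. of_nat (pfun r a n) = (\<Sum>m<r. d' m n * of_nat n ^ m)"
  shows "d = d'"
proof (intro ext)
  fix m n
  show "d m n = d' m n"
  proof (cases "m < r")
    case False thus ?thesis using assms(2,5) by auto
  next
    case True
    define R where "R = (\<Sum>i<r. monom (d i n - d' i n) i)"
    have roots: "poly R (of_nat (n + k * D)) = 0" for k
    proof -
      have pd: "d i (n + k * D) = d i n" "d' i (n + k * D) = d' i n" for i
        using periodic_iter[of "d i" D n k] periodic_iter[of "d' i" D n k] assms(3,6) by auto
      have gen: "poly R x = (\<Sum>i<r. d i n * x ^ i) - (\<Sum>i<r. d' i n * x ^ i)" for x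
        by (simp add: R_def poly_sum poly_monom algebra_simps sum_subtractf)
      have e1: "(\<Sum>i<r. d i n * of_nat (n + k * D) ^ i) = of_nat (pfun r a (n + k * D))"
        using assms(4) pd(1) by simp
      have e2: "(\<Sum>i<r. d' i n * of_nat (n + k * D) ^ i) = of_nat (pfun r a (n + k * D))"
        using assms(7) pd(2) by simp
      show ?thesis unfolding gen e1 e2 by simp
    qed
    have "R = 0"
    proof (rule ccontr)
      assume "R \<noteq> 0"
      hence fin: "finite {x. poly R x = 0}" by (rule poly_roots_finite)
      have "range (\<lambda>k. (of_nat (n + k * D) :: rat)) \<subseteq> {x. poly R x = 0}" using roots by auto
      moreover have "inj (\<lambda>k. (of_nat (n + k * D) :: rat))"
        using assms(1) by (auto simp: inj_on_def)
      hence "infinite (range (\<lambda>k. (of_nat (n + k * D) :: rat)))"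
        using range_inj_infinite by blast
      ultimately show False using fin finite_subset by blast
    qed
    hence "coeff R m = 0" by simp
    moreover have "coeff R m = d m n - d' m n"
      using True by (simp add: R_def coeff_sum)
    ultimately show ?thesis by simp
  qed
qed

lemma dcoef_props:
  assumes "r \<ge> 1" "\<forall>i<r. a i > 0" "D > 0" "\<forall>i<r. a i dvd D"
  shows "(\<forall>m\<ge>r. dcoef r a D m = (\<lambda>_. 0)) \<and> (\<forall>m n. dcoef r a D m (n + D) = dcoef r a D m n) \<and>
           (\<forall>n. of_nat (pfun r a n) = (\<Sum>m<r. dcoef r a D m n * of_nat n ^ m))"
proof -
  obtain d0 :: "nat \<Rightarrow> nat \<Rightarrow> rat" where d0: "(\<forall>m\<ge>r. d0 m = (\<lambda>_. 0)) \<and> (\<forall>m n. d0 m (n + D) = d0 m n) \<and>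
           (\<forall>n. of_nat (pfun r a n) = (\<Sum>m<r. d0 m n * of_nat n ^ m))"
    using quasi_exists[OF assms] by blast
  have "dcoef r a D = d0"
    unfolding dcoef_def
    by (rule the_equality) (use d0 quasi_unique[OF assms(3)] in blast)+
  thus ?thesis using d0 by simp
qed



lemma coeff_shift:
  fixes p :: "complex poly"
  shows "degree p = Suc d \<Longrightarrow> coeff (p \<circ>\<^sub>p [:b, 1:]) d = coeff p d + b * of_nat (Suc d) * lead_coeff p"
proof (induction p arbitrary: d rule: pCons_induct)
  case 0 thus ?case by simp
next
  case (pCons c p0)
  have p0nz: "p0 \<noteq> 0" using pCons.prems by auto
  have dp0: "degree p0 = d" using pCons.prems p0nz by simp
  let ?q = "[:b, 1:] :: complex poly"
  have comp: "pCons c p0 \<circ>\<^sub>p ?q = [:c:] + (smult b (p0 \<circ>\<^sub>p ?q) + pCons 0 (p0 \<circ>\<^sub>p ?q))"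
    by (simp add: pcompose_pCons)
  have dq: "degree (p0 \<circ>\<^sub>p ?q) = d" by (simp add: degree_pcompose dp0)
  have lcq: "lead_coeff (p0 \<circ>\<^sub>p ?q) = lead_coeff p0" using lead_coeff_comp[of ?q p0] by simp
  have lcp: "lead_coeff (pCons c p0) = lead_coeff p0" using p0nz by simp
  show ?case
  proof (cases d)
    case 0
    have "p0 = [:coeff p0 0:]" using degree_0_id[of p0] dp0 0 by simp
    then obtain e where e0: "p0 = [:e:]" by blast
    hence e: "p0 = [:e:]" "e \<noteq> 0" using p0nz by auto
    show ?thesis using 0 e by (simp add: comp)
  next
    case (Suc d')
    have IH: "coeff (p0 \<circ>\<^sub>p ?q) d' = coeff p0 d' + b * of_nat (Suc d') * lead_coeff p0"
      using pCons.IH[of d'] dp0 Suc by simp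
    have top: "coeff (p0 \<circ>\<^sub>p ?q) d = lead_coeff p0" using dq lcq by simp
    show ?thesis unfolding comp lcp using IH top Suc by (simp add: algebra_simps)
  qed
qed

definition Top :: "complex \<Rightarrow> nat \<Rightarrow> complex poly \<Rightarrow> complex poly" where
  "Top c a p = smult c (p \<circ>\<^sub>p [:of_nat a, 1:]) - p"

lemma Top_0 [simp]: "Top c a 0 = 0" by (simp add: Top_def)

lemma Top_nonunit:
  assumes "c \<noteq> 1" "p \<noteq> 0"
  shows "Top c a p \<noteq> 0 \<and> degree (Top c a p) = degree p"
proof -
  let ?q = "[:of_nat a, 1:] :: complex poly"
  have dq: "degree (p \<circ>\<^sub>p ?q) = degree p" by (simp add: degree_pcompose)
  have lcq: "lead_coeff (p \<circ>\<^sub>p ?q) = lead_coeff p" using lead_coeff_comp[of ?q p] by simp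
  have c: "coeff (Top c a p) (degree p) = (c - 1) * lead_coeff p"
    using dq lcq by (simp add: Top_def algebra_simps)
  have nz: "coeff (Top c a p) (degree p) \<noteq> 0" using c assms by simp
  have "degree (smult c (p \<circ>\<^sub>p ?q)) \<le> degree p"
    using degree_smult_le[of c "p \<circ>\<^sub>p ?q"] dq by simp
  hence le: "degree (Top c a p) \<le> degree p"
    unfolding Top_def by (intro degree_diff_le) auto
  from nz have "degree p \<le> degree (Top c a p)" by (rule le_degree)
  with le nz show ?thesis by auto
qed

lemma Top_unit_Suc:
  assumes "degree p = Suc d" "a > 0"
  shows "Top 1 a p \<noteq> 0 \<and> degree (Top 1 a p) = d"
proof -
  let ?q = "[:of_nat a, 1:] :: complex poly"
  have dq: "degree (p \<circ>\<^sub>p ?q) = degree p" by (simp add: degree_pcompose)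
  have lcq: "lead_coeff (p \<circ>\<^sub>p ?q) = lead_coeff p" using lead_coeff_comp[of ?q p] by simp
  have pnz: "p \<noteq> 0" using assms by auto
  have cd: "coeff (Top 1 a p) d = of_nat a * of_nat (Suc d) * lead_coeff p"
    using coeff_shift[OF assms(1), of "of_nat a"] by (simp add: Top_def)
  have h1: "of_nat (Suc d) \<noteq> (0::complex)" by (rule of_nat_neq_0)
  have h2: "lead_coeff p \<noteq> 0" using pnz by simp
  have h0: "of_nat a \<noteq> (0::complex)" using assms(2) by simp
  have "of_nat a * of_nat (Suc d) * lead_coeff p \<noteq> 0"
    using h0 h1 h2 by (simp only: mult_eq_0_iff) blast
  hence nz: "coeff (Top 1 a p) d \<noteq> 0" unfolding cd .
  have hi: "coeff (Top 1 a p) i = 0" if "i > d" for i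
  proof (cases "i = Suc d")
    case True thus ?thesis using dq lcq assms(1) by (simp add: Top_def)
  next
    case False
    hence "i > degree p" "i > degree (p \<circ>\<^sub>p ?q)" using that assms(1) dq by auto
    thus ?thesis by (simp add: Top_def coeff_eq_0)
  qed
  have "degree (Top 1 a p) \<le> d" using hi by (intro degree_le) auto
  moreover have "d \<le> degree (Top 1 a p)" using nz by (rule le_degree)
  ultimately show ?thesis using nz by auto
qed

lemma Top_unit_0:
  assumes "degree p = 0"
  shows "Top 1 a p = 0"
proof -
  have "p = [:coeff p 0:]" using degree_0_id[OF assms] by simp
  hence "p \<circ>\<^sub>p [:of_nat a, 1:] = p" by (metis pcompose_const)
  thus ?thesis by (simp add: Top_def)
qed

definition rep :: "complex set \<Rightarrow> (complex \<Rightarrow> complex poly) \<Rightarrow> nat \<Rightarrow> complex" where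
  "rep U P n = (\<Sum>z\<in>U. poly (P z) (of_nat n) * inverse z ^ n)"

lemma rep_Top:
  "c * rep U P (n + a) - rep U P n = rep U (\<lambda>z. Top (c * inverse z ^ a) a (P z)) n"
proof -
  have "c * rep U P (n + a) = (\<Sum>z\<in>U. c * (poly (P z) (of_nat n + of_nat a) * inverse z ^ (n + a)))"
    by (simp add: rep_def sum_distrib_left)
  moreover have "rep U (\<lambda>z. Top (c * inverse z ^ a) a (P z)) n =
      (\<Sum>z\<in>U. c * (poly (P z) (of_nat n + of_nat a) * inverse z ^ (n + a)) - poly (P z) (of_nat n) * inverse z ^ n)"
    by (simp add: rep_def Top_def poly_pcompose power_add algebra_simps)
  ultimately show ?thesis by (simp add: rep_def sum_subtractf)
qed

definition msr :: "complex poly \<Rightarrow> nat" where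
  "msr p = (if p = 0 then 0 else Suc (degree p))"

lemma rep_unique_aux:
  assumes "finite U" "0 \<notin> U"
  shows "\<forall>P. (\<Sum>z\<in>U. msr (P z)) = N \<longrightarrow> (\<forall>n. rep U P n = 0) \<longrightarrow> (\<forall>z\<in>U. P z = 0)"
proof (induction N rule: less_induct)
  case (less N)
  show ?case
  proof (intro allI impI ballI)
    fix P z assume N: "(\<Sum>z\<in>U. msr (P z)) = N" and z0: "\<forall>n. rep U P n = 0" and zU: "z \<in> U"
    show "P z = 0"
    proof (rule ccontr)
      assume "P z \<noteq> 0"
      define mu where "mu = z"
      have muU: "mu \<in> U" and Pmu: "P mu \<noteq> 0" using zU \<open>P z \<noteq> 0\<close> by (auto simp: mu_def)
      have mu0: "mu \<noteq> 0" using muU assms(2) by auto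
      define P' where "P' w = Top (mu * inverse w ^ 1) 1 (P w)" for w
      have r': "rep U P' n = 0" for n
        using rep_Top[of mu U P n 1] z0 unfolding P'_def by simp
      have le: "msr (P' w) \<le> msr (P w)" if "w \<in> U" for w
      proof (cases "P w = 0")
        case True thus ?thesis by (simp add: P'_def msr_def)
      next
        case False
        show ?thesis
        proof (cases "w = mu")
          case True
          hence c1: "mu * inverse w ^ 1 = 1" using mu0 by simp
          show ?thesis
          proof (cases "degree (P w)")
            case 0 thus ?thesis using c1 by (simp add: P'_def msr_def Top_unit_0)
          next
            case (Suc d) thus ?thesis using c1 Top_unit_Suc[OF Suc, of 1] \<open>P w \<noteq> 0\<close> by (simp add: P'_def msr_def)
          qed
        next
          case False
          moreover have "w \<noteq> 0" using that assms(2) by auto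
          ultimately have "mu * inverse w ^ 1 \<noteq> 1" by (simp add: field_simps)
          thus ?thesis using Top_nonunit[OF _ \<open>P w \<noteq> 0\<close>] \<open>P w \<noteq> 0\<close> by (simp add: P'_def msr_def)
        qed
      qed
      have lt: "msr (P' mu) < msr (P mu)"
      proof -
        have c1: "mu * inverse mu ^ 1 = 1" using mu0 by simp
        show ?thesis
        proof (cases "degree (P mu)")
          case 0 thus ?thesis using c1 Pmu by (simp add: P'_def msr_def Top_unit_0)
        next
          case (Suc d) thus ?thesis using c1 Top_unit_Suc[OF Suc, of 1] Pmu by (simp add: P'_def msr_def)
        qed
      qed
      have "(\<Sum>w\<in>U. msr (P' w)) < N"
        unfolding N[symmetric] using assms(1) le lt muU by (intro sum_strict_mono_ex1) auto
      hence allz: "\<forall>w\<in>U. P' w = 0" using less.IH r' by blast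
      have deg0: "degree (P mu) = 0"
      proof (rule ccontr)
        assume "degree (P mu) \<noteq> 0"
        then obtain d where "degree (P mu) = Suc d" by (cases "degree (P mu)") auto
        hence "P' mu \<noteq> 0" using Top_unit_Suc[of "P mu" d 1] mu0 by (simp add: P'_def)
        thus False using allz muU by auto
      qed
      have others: "P w = 0" if "w \<in> U" "w \<noteq> mu" for w
      proof (rule ccontr)
        assume "P w \<noteq> 0"
        have "w \<noteq> 0" using that assms(2) by auto
        hence "mu * inverse w ^ 1 \<noteq> 1" using that by (simp add: field_simps)
        hence "P' w \<noteq> 0" using Top_nonunit[OF _ \<open>P w \<noteq> 0\<close>] by (simp add: P'_def)
        thus False using allz that by auto
      qed
      have "rep U P 0 = (\<Sum>w\<in>U. poly (P w) 0)" by (simp add: rep_def)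
      also have "\<dots> = poly (P mu) 0 + (\<Sum>w\<in>U - {mu}. poly (P w) 0)"
        using assms(1) muU by (simp add: sum.remove)
      also have "(\<Sum>w\<in>U - {mu}. poly (P w) 0) = 0" using others by simp
      also have "poly (P mu) 0 = coeff (P mu) 0" by (simp add: poly_0_coeff_0)
      finally have "coeff (P mu) 0 = 0" using z0 by simp
      moreover have "P mu = [:coeff (P mu) 0:]" using degree_0_id[OF deg0] by simp
      ultimately have "P mu = 0" by simp
      thus False using Pmu by simp
    qed
  qed
qed

lemma rep_unique:
  assumes "finite U" "0 \<notin> U" "\<forall>n. rep U P n = 0"
  shows "\<forall>z\<in>U. P z = 0"
  using rep_unique_aux[OF assms(1,2)] assms(3) by blast



lemma rho_cis: "rho j = cis (2 * pi / real j)"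
  by (simp add: rho_def cis_conv_exp mult_ac)

lemma cis_pow_1:
  assumes "j \<ge> 1"
  shows "cis (2 * pi / real j) ^ k = 1 \<longleftrightarrow> j dvd k"
proof
  assume h: "cis (2 * pi / real j) ^ k = 1"
  hence "cis (real k * (2 * pi / real j)) = 1" by (simp add: DeMoivre)
  hence "cos (real k * (2 * pi / real j)) = 1" by (metis cis.sel(1) one_complex.sel(1))
  then obtain n :: int where n: "real k * (2 * pi / real j) = real_of_int n * 2 * pi" using cos_one_2pi_int by blast
  hence "real k = real_of_int n * real j" using assms by (simp add: field_simps)
  hence "int k = n * int j" by (metis of_int_eq_iff of_int_mult of_int_of_nat_eq)
  hence "int j dvd int k" by simp
  thus "j dvd k" by simp
next
  assume "j dvd k"
  then obtain m where m: "k = j * m" by auto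
  have "cis (2 * pi / real j) ^ k = cis (real k * (2 * pi / real j))" by (simp add: DeMoivre)
  also have "real k * (2 * pi / real j) = 2 * pi * real m" using assms m by (simp add: field_simps)
  also have "cis (2 * pi * real m) = 1" by (rule cis_multiple_2pi) simp
  finally show "cis (2 * pi / real j) ^ k = 1" .
qed

lemma rho_pow_1: "j \<ge> 1 \<Longrightarrow> rho j ^ k = 1 \<longleftrightarrow> j dvd k"
  unfolding rho_cis by (rule cis_pow_1)

lemma sum_roots_pow:
  assumes "D > 0"
  shows "(\<Sum>z\<in>{z::complex. z ^ D = 1}. z ^ k) = (if D dvd k then of_nat D else 0)"
proof -
  define w where "w = cis (2 * pi / real D)"
  have "(\<Sum>z\<in>{z::complex. z ^ D = 1}. z ^ k) = (\<Sum>t<D. cis (2 * pi * real t / real D) ^ k)"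
    using assms by (intro sum.reindex_bij_betw[symmetric] bij_betw_roots_unity)
  also have "\<dots> = (\<Sum>t<D. (w ^ k) ^ t)"
  proof (rule sum.cong[OF refl])
    fix t
    have "cis (2 * pi * real t / real D) ^ k = cis (real k * (2 * pi * real t / real D))"
      by (rule DeMoivre)
    also have "real k * (2 * pi * real t / real D) = real (k * t) * (2 * pi / real D)"
      by simp
    also have "cis (real (k * t) * (2 * pi / real D)) = (w ^ k) ^ t"
      unfolding w_def DeMoivre[symmetric] by (simp add: power_mult)
    finally show "cis (2 * pi * real t / real D) ^ k = (w ^ k) ^ t" .
  qed
  also have "\<dots> = (if D dvd k then of_nat D else 0)"
  proof (cases "D dvd k")
    case True
    hence "w ^ k = 1" using cis_pow_1[of D k] assms by (simp add: w_def)
    thus ?thesis using True by simp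
  next
    case False
    hence "w ^ k \<noteq> 1" using cis_pow_1[of D k] assms by (simp add: w_def)
    moreover have "(w ^ k) ^ D = 1"
      using cis_pow_1[of D "D * k"] assms by (simp add: w_def power_mult[symmetric] mult.commute)
    ultimately show ?thesis using False by (simp add: sum_gp_strict)
  qed
  finally show ?thesis .
qed

lemma dvd_iff_modeq:
  fixes D v n :: nat
  assumes "D > 0" "v < D"
  shows "D dvd (v + (D - 1) * n) \<longleftrightarrow> v = n mod D"
proof -
  have e: "v + (D - 1) * n + n = v + D * n" using assms by (cases D) auto
  have "int (v + (D - 1) * n) + int n = int v + int D * int n"
    using arg_cong[OF e, of int] by simp
  hence "int (v + (D - 1) * n) = (int v - int n) + int D * int n" by linarith
  hence "D dvd (v + (D - 1) * n) \<longleftrightarrow> int D dvd (int v - int n) + int D * int n"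
    by (simp only: int_dvd_int_iff[symmetric])
  also have "\<dots> \<longleftrightarrow> int D dvd (int v - int n)"
    by (rule dvd_add_left_iff) simp
  also have "\<dots> \<longleftrightarrow> int v mod int D = int n mod int D" by (simp add: mod_eq_dvd_iff)
  also have "\<dots> \<longleftrightarrow> int (v mod D) = int (n mod D)" by (simp only: of_nat_mod)
  also have "\<dots> \<longleftrightarrow> v = n mod D" using assms by simp
  finally show ?thesis .
qed

lemma fourier:
  fixes f :: "nat \<Rightarrow> complex"
  assumes "D > 0" "\<forall>n. f (n + D) = f n"
  shows "f n = (\<Sum>z\<in>{z. z ^ D = 1}. ((1 / of_nat D) * (\<Sum>v<D. z ^ v * f v)) * inverse z ^ n)"
proof -
  let ?U = "{z::complex. z ^ D = 1}"
  have inv: "inverse z ^ n = z ^ ((D - 1) * n)" if "z \<in> ?U" for z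
  proof -
    have zD: "z ^ D = 1" using that by simp
    have "z * z ^ (D - 1) = z ^ Suc (D - 1)" by simp
    also have "Suc (D - 1) = D" using assms by simp
    finally have "z * z ^ (D - 1) = 1" using zD by simp
    hence "inverse z = z ^ (D - 1)" by (rule inverse_unique)
    thus ?thesis by (simp add: power_mult)
  qed
  have "(\<Sum>z\<in>?U. ((1 / of_nat D) * (\<Sum>v<D. z ^ v * f v)) * inverse z ^ n)
      = (\<Sum>z\<in>?U. \<Sum>v<D. (1 / of_nat D) * f v * z ^ (v + (D - 1) * n))"
  proof (rule sum.cong[OF refl])
    fix z assume z: "z \<in> ?U"
    have "((1 / of_nat D) * (\<Sum>v<D. z ^ v * f v)) * inverse z ^ n
        = (\<Sum>v<D. (1 / of_nat D) * (z ^ v * f v)) * z ^ ((D - 1) * n)"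
      by (simp only: inv[OF z] sum_distrib_left)
    also have "\<dots> = (\<Sum>v<D. (1 / of_nat D) * (z ^ v * f v) * z ^ ((D - 1) * n))"
      by (rule sum_distrib_right)
    also have "\<dots> = (\<Sum>v<D. (1 / of_nat D) * f v * z ^ (v + (D - 1) * n))"
      by (intro sum.cong refl) (simp only: power_add mult_ac)
    finally show "((1 / of_nat D) * (\<Sum>v<D. z ^ v * f v)) * inverse z ^ n
        = (\<Sum>v<D. (1 / of_nat D) * f v * z ^ (v + (D - 1) * n))" .
  qed
  also have "\<dots> = (\<Sum>v<D. (1 / of_nat D) * f v * (\<Sum>z\<in>?U. z ^ (v + (D - 1) * n)))"
    by (subst sum.swap) (simp add: sum_distrib_left)
  also have "\<dots> = (\<Sum>v<D. if v = n mod D then f v else 0)"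
  proof (rule sum.cong[OF refl])
    fix v assume "v \<in> {..<D}"
    hence e: "D dvd (v + (D - 1) * n) \<longleftrightarrow> v = n mod D" using assms(1) by (intro dvd_iff_modeq) auto
    show "(1 / of_nat D) * f v * (\<Sum>z\<in>?U. z ^ (v + (D - 1) * n)) = (if v = n mod D then f v else 0)"
      unfolding sum_roots_pow[OF assms(1)] e using assms(1) by simp
  qed
  also have "\<dots> = f (n mod D)" using assms(1) by simp
  also have "f (n mod D) = f n"
    using periodic_iter[of f D "n mod D" "n div D"] assms(2) by (simp add: mod_div_mult_eq)
  finally show ?thesis ..
qed



fun oprr :: "(nat \<Rightarrow> nat) \<Rightarrow> nat \<Rightarrow> (nat \<Rightarrow> complex) \<Rightarrow> nat \<Rightarrow> complex" where
  "oprr a 0 f = f"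
| "oprr a (Suc k) f = oprr a k (\<lambda>n. f (n + a k) - f n)"

lemma oprr_shift: "oprr a k (\<lambda>n. f (n + s)) = (\<lambda>n. oprr a k f (n + s))"
proof (induction k arbitrary: f)
  case 0 thus ?case by simp
next
  case (Suc k)
  define g where "g = (\<lambda>m. f (m + a k) - f m)"
  have "oprr a (Suc k) (\<lambda>n. f (n + s)) = oprr a k (\<lambda>n. g (n + s))"
    by (simp add: g_def ac_simps)
  also have "\<dots> = (\<lambda>n. oprr a k g (n + s))" by (rule Suc.IH)
  also have "oprr a k g = oprr a (Suc k) f" by (simp add: g_def)
  finally show ?case .
qed

lemma oprr_pfun:
  "(\<forall>i<k. a i > 0) \<Longrightarrow> oprr a k (\<lambda>n. of_nat (pfun k a n)) = (\<lambda>n. of_nat (pfun 0 a (n + (\<Sum>i<k. a i))))"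
proof (induction k)
  case 0 thus ?case by simp
next
  case (Suc k)
  have "(\<lambda>n. (of_nat (pfun (Suc k) a (n + a k)) :: complex) - of_nat (pfun (Suc k) a n))
        = (\<lambda>n. of_nat (pfun k a (n + a k)))"
    using pfun_rec[of k a] Suc.prems by (simp add: fun_eq_iff)
  hence "oprr a (Suc k) (\<lambda>n. of_nat (pfun (Suc k) a n)) = oprr a k (\<lambda>n. of_nat (pfun k a (n + a k)))"
    by simp
  also have "\<dots> = (\<lambda>n. oprr a k (\<lambda>n. of_nat (pfun k a n)) (n + a k))" by (rule oprr_shift)
  also have "\<dots> = (\<lambda>n. of_nat (pfun 0 a (n + (\<Sum>i<Suc k. a i))))"
    using Suc by (simp add: ac_simps)
  finally show ?case .
qed

fun cp :: "(nat \<Rightarrow> nat) \<Rightarrow> complex \<Rightarrow> nat \<Rightarrow> complex poly \<Rightarrow> complex poly" where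
  "cp a z 0 p = p"
| "cp a z (Suc k) p = cp a z k (Top (inverse z ^ a k) (a k) p)"

lemma oprr_rep: "oprr a k (rep U P) = rep U (\<lambda>z. cp a z k (P z))"
proof (induction k arbitrary: P)
  case 0 thus ?case by (simp add: fun_eq_iff)
next
  case (Suc k)
  have "(\<lambda>n. rep U P (n + a k) - rep U P n) = rep U (\<lambda>z. Top (inverse z ^ a k) (a k) (P z))"
    using rep_Top[of 1 U P _ "a k"] by (simp add: fun_eq_iff)
  thus ?case using Suc.IH by simp
qed

lemma cp_deg:
  "(\<forall>i<k. a i > 0) \<Longrightarrow> p \<noteq> 0 \<Longrightarrow> degree p \<ge> (\<Sum>i<k. if inverse z ^ a i = 1 then 1 else 0) \<Longrightarrow>
   cp a z k p \<noteq> 0 \<and> degree (cp a z k p) = degree p - (\<Sum>i<k. if inverse z ^ a i = 1 then 1 else 0)"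
proof (induction k arbitrary: p)
  case 0 thus ?case by simp
next
  case (Suc k)
  define u where "u = (\<Sum>i<k. if inverse z ^ a i = 1 then 1 else (0::nat))"
  have ak: "a k > 0" using Suc.prems(1) by simp
  have pos: "\<forall>i<k. a i > 0" using Suc.prems(1) by simp
  show ?case
  proof (cases "inverse z ^ a k = 1")
    case True
    have us: "(\<Sum>i<Suc k. if inverse z ^ a i = 1 then 1 else (0::nat)) = Suc u"
      using True by (simp add: u_def)
    have "degree p \<ge> Suc u" using Suc.prems(3) us by simp
    then obtain d where d: "degree p = Suc d" by (cases "degree p") auto
    have T: "Top 1 (a k) p \<noteq> 0 \<and> degree (Top 1 (a k) p) = d" by (rule Top_unit_Suc[OF d ak])
    have "d \<ge> u" using \<open>degree p \<ge> Suc u\<close> d by simp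
    hence "cp a z k (Top 1 (a k) p) \<noteq> 0 \<and> degree (cp a z k (Top 1 (a k) p)) = d - u"
      using Suc.IH[OF pos, of "Top 1 (a k) p"] T by (simp add: u_def)
    thus ?thesis using True us d by simp
  next
    case False
    have us: "(\<Sum>i<Suc k. if inverse z ^ a i = 1 then 1 else (0::nat)) = u"
      using False by (simp add: u_def)
    have T: "Top (inverse z ^ a k) (a k) p \<noteq> 0 \<and> degree (Top (inverse z ^ a k) (a k) p) = degree p"
      by (rule Top_nonunit[OF False Suc.prems(2)])
    have "degree p \<ge> u" using Suc.prems(3) us by simp
    hence "cp a z k (Top (inverse z ^ a k) (a k) p) \<noteq> 0 \<and>
           degree (cp a z k (Top (inverse z ^ a k) (a k) p)) = degree p - u"
      using Suc.IH[OF pos, of "Top (inverse z ^ a k) (a k) p"] T by (simp add: u_def)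
    thus ?thesis using us by simp
  qed
qed

lemma card_sum_if: fixes r :: nat shows "card {i. i < r \<and> Q i} = (\<Sum>i<r. if Q i then 1 else (0::nat))"
proof -
  have "{i. i < r \<and> Q i} = {i \<in> {..<r}. Q i}" by auto
  hence "card {i. i < r \<and> Q i} = (\<Sum>i\<in>{i \<in> {..<r}. Q i}. 1)" by simp
  also have "\<dots> = (\<Sum>i<r. if Q i then 1 else 0)" by (rule sum.inter_filter) simp
  finally show ?thesis .
qed



theorem proposition4p1:
  fixes r D j :: nat and a :: "nat \<Rightarrow> nat"
  assumes "r \<ge> 1"
    and "\<forall>i<r. a i > 0"
    and "D > 0" and "\<forall>i<r. a i dvd D"
    and "j \<ge> 1" and "\<exists>i<r. j dvd a i"
  shows "\<forall>n::nat. wave r a D j n =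
           inverse (rho j) ^ n *
           (\<Sum>m=1..mult_j r a j. Rcoef r a D j m * of_nat n ^ (m - 1))"
proof
  fix n :: nat
  define U where "U = {z::complex. z ^ D = 1}"
  define cf where "cf m (z::complex) = 1 / of_nat D * (\<Sum>v<D. z ^ v * of_rat (dcoef r a D m v))" for m z
  define P0 where "P0 (z::complex) = (if z ^ D = 1 then (\<Sum>m<r. monom (cf m z) m) else 0)" for z
  define \<rho> where "\<rho> = rho j"
  define mj where "mj = mult_j r a j"
  have finU: "finite U" unfolding U_def using assms(3) by (intro finite_roots_unity) simp
  have U0: "0 \<notin> U" unfolding U_def using assms(3) by (simp add: zero_power)
  have dp: "(\<forall>m\<ge>r. dcoef r a D m = (\<lambda>_. 0)) \<and> (\<forall>m n. dcoef r a D m (n + D) = dcoef r a D m n) \<and>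
           (\<forall>n. of_nat (pfun r a n) = (\<Sum>m<r. dcoef r a D m n * of_nat n ^ m))"
    by (rule dcoef_props[OF assms(1-4)])
  have repP0: "rep U P0 k = of_nat (pfun r a k)" for k
  proof -
    have "rep U P0 k = (\<Sum>z\<in>U. \<Sum>m<r. of_nat k ^ m * (cf m z * inverse z ^ k))"
      unfolding rep_def
      by (intro sum.cong refl) (simp add: U_def P0_def poly_sum poly_monom sum_distrib_right sum_distrib_left mult_ac)
    also have "\<dots> = (\<Sum>m<r. of_nat k ^ m * (\<Sum>z\<in>U. cf m z * inverse z ^ k))"
      by (subst sum.swap) (simp add: sum_distrib_left)
    also have "\<dots> = (\<Sum>m<r. of_nat k ^ m * of_rat (dcoef r a D m k))"
    proof (intro sum.cong refl)
      fix m
      have per: "\<forall>n. (\<lambda>v. of_rat (dcoef r a D m v) :: complex) (n + D) = of_rat (dcoef r a D m n)"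
        using dp by simp
      have "(of_rat (dcoef r a D m k) :: complex) = (\<Sum>z\<in>U. cf m z * inverse z ^ k)"
        using fourier[OF assms(3) per, of k] by (simp add: U_def cf_def)
      thus "of_nat k ^ m * (\<Sum>z\<in>U. cf m z * inverse z ^ k) = of_nat k ^ m * of_rat (dcoef r a D m k)"
        by simp
    qed
    also have "\<dots> = of_rat (\<Sum>m<r. dcoef r a D m k * of_nat k ^ m)"
      by (simp add: of_rat_sum of_rat_mult of_rat_power mult_ac)
    also have "\<dots> = of_rat (of_nat (pfun r a k))" using dp by simp
    finally show ?thesis by simp
  qed
  have Pp: "Ppoly r a D = P0"
    unfolding Ppoly_def
  proof (rule the_equality)
    show "(\<forall>z. z ^ D \<noteq> 1 \<longrightarrow> P0 z = 0) \<and>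
      (\<forall>n. of_nat (pfun r a n) = (\<Sum>z\<in>{z. z ^ D = 1}. poly (P0 z) (of_nat n) * inverse z ^ n))"
      using repP0 by (simp add: P0_def rep_def U_def)
  next
    fix P :: "complex \<Rightarrow> complex poly" assume h: "(\<forall>z. z ^ D \<noteq> 1 \<longrightarrow> P z = 0) \<and>
      (\<forall>n. of_nat (pfun r a n) = (\<Sum>z\<in>{z. z ^ D = 1}. poly (P z) (of_nat n) * inverse z ^ n))"
    have "rep U (\<lambda>z. P z - P0 z) k = 0" for k
    proof -
      have "rep U (\<lambda>z. P z - P0 z) k = rep U P k - rep U P0 k"
        by (simp add: rep_def algebra_simps sum_subtractf)
      also have "rep U P k = of_nat (pfun r a k)" using h by (simp add: rep_def U_def)
      finally show ?thesis using repP0 by simp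
    qed
    hence "\<forall>z\<in>U. P z - P0 z = 0" using rep_unique[OF finU U0] by blast
    thus "P = P0" using h by (auto simp: fun_eq_iff U_def P0_def)
  qed
  obtain i0 where i0: "i0 < r" "j dvd a i0" using assms(6) by blast
  have jD: "j dvd D" using i0 assms(4) dvd_trans by blast
  have rhoU: "\<rho> \<in> U" using rho_pow_1[OF assms(5)] jD by (simp add: U_def \<rho>_def)
  have inv1: "inverse \<rho> ^ k = 1 \<longleftrightarrow> j dvd k" for k
    using rho_pow_1[OF assms(5), of k] by (simp add: \<rho>_def power_inverse)
  have usum: "(\<Sum>i<r. if inverse \<rho> ^ a i = 1 then 1 else 0) = mj"
    by (simp add: inv1 mj_def mult_j_def card_sum_if)
  have mj1: "mj \<ge> 1"
  proof -
    have "finite {i. i < r \<and> j dvd a i}" by simp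
    moreover have "i0 \<in> {i. i < r \<and> j dvd a i}" using i0 by simp
    ultimately have "card {i. i < r \<and> j dvd a i} > 0" by (metis card_gt_0_iff empty_iff)
    thus ?thesis by (simp add: mj_def mult_j_def)
  qed
  have mjr: "mj \<le> r"
  proof -
    have "card {i. i < r \<and> j dvd a i} \<le> card {..<r}" by (intro card_mono) auto
    thus ?thesis by (simp add: mj_def mult_j_def)
  qed
  have opz: "oprr a r (rep U P0) = (\<lambda>n. 0)"
  proof -
    have "rep U P0 = (\<lambda>n. of_nat (pfun r a n))" using repP0 by auto
    hence "oprr a r (rep U P0) = (\<lambda>n. of_nat (pfun 0 a (n + (\<Sum>i<r. a i))))"
      using oprr_pfun[of r a] assms(2) by simp
    moreover have "(\<Sum>i<r. a i) > 0"
    proof -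
      have "a 0 \<le> (\<Sum>i<r. a i)" using assms(1) by (intro member_le_sum) auto
      thus ?thesis using assms(1,2) by auto
    qed
    moreover have ex: "\<exists>i\<in>{..<r}. 0 < a i" using assms(1,2) by (intro bexI[of _ 0]) auto
    ultimately show ?thesis by (simp add: fun_eq_iff pfun_0)
  qed
  have cpz: "cp a \<rho> r (P0 \<rho>) = 0"
  proof -
    have "\<forall>k. rep U (\<lambda>z. cp a z r (P0 z)) k = 0" using opz oprr_rep[of a r U P0] by (simp add: fun_eq_iff)
    thus ?thesis using rep_unique[OF finU U0] rhoU by blast
  qed
  have degP: "degree (P0 \<rho>) < mj"
  proof (cases "P0 \<rho> = 0")
    case True thus ?thesis using mj1 by simp
  next
    case False
    show ?thesis
    proof (rule ccontr)
      assume "\<not> degree (P0 \<rho>) < mj"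
      hence "degree (P0 \<rho>) \<ge> (\<Sum>i<r. if inverse \<rho> ^ a i = 1 then 1 else 0)" using usum by simp
      hence "cp a \<rho> r (P0 \<rho>) \<noteq> 0" using cp_deg[of r a "P0 \<rho>" \<rho>] assms(2) False by blast
      thus False using cpz by simp
    qed
  qed
  have coefP: "coeff (P0 \<rho>) m = cf m \<rho>" if "m < r" for m
    using rhoU that by (simp add: P0_def U_def coeff_sum)
  have polyP: "poly (P0 \<rho>) (of_nat n) = (\<Sum>m<mj. Rcoef r a D j (Suc m) * of_nat n ^ m)"
  proof -
    have "poly (P0 \<rho>) (of_nat n) = (\<Sum>m<mj. coeff (P0 \<rho>) m * of_nat n ^ m)"
      using degP by (intro poly_sum_lt) (auto intro: coeff_eq_0)
    also have "\<dots> = (\<Sum>m<mj. Rcoef r a D j (Suc m) * of_nat n ^ m)"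
    proof (intro sum.cong refl)
      fix m assume "m \<in> {..<mj}"
      hence "m < r" using mjr by auto
      hence "coeff (P0 \<rho>) m = cf m \<rho>" by (rule coefP)
      also have "cf m \<rho> = Rcoef r a D j (Suc m)" by (simp add: cf_def Rcoef_def \<rho>_def)
      finally show "coeff (P0 \<rho>) m * of_nat n ^ m = Rcoef r a D j (Suc m) * of_nat n ^ m" by simp
    qed
    finally show ?thesis .
  qed
  have "(\<Sum>m=1..mj. Rcoef r a D j m * of_nat n ^ (m - 1)) = (\<Sum>m<mj. Rcoef r a D j (Suc m) * of_nat n ^ m)"
    using sum.atLeast1_atMost_eq[of "\<lambda>m. Rcoef r a D j m * of_nat n ^ (m - 1)" mj] by simp
  thus "wave r a D j n = inverse (rho j) ^ n *
           (\<Sum>m=1..mult_j r a j. Rcoef r a D j m * of_nat n ^ (m - 1))"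
    using polyP by (simp add: wave_def Pp \<rho>_def mj_def mult.commute)
qed

end
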